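(* For every $\alpha\in(0,1)$, \[ \sum_{t=1}^\infty\Big(1-\frac{1}{t^\alpha}\Big)^t\ \le\ \frac{1}{1-\alpha}\,\Gamma\Big(\frac{1}{1-\alpha}\Big). \]
   Context: $\Gamma(z)=\int_0^\infty t^{z-1}e^{-t}\,dt$ is the Gamma function. *)

theory Defs
  imports "HOL-Analysis.Analysis"
begin

end

theory Submission
  imports Defs
begin

lemma ftc_powr:
  fixes a b p :: real
  assumes "0 \<le> a" "a \<le> b" "p > 0"
  shows "((\<lambda>u. u powr (p - 1)) has_integral (b powr p / p - a powr p / p)) {a..b}"
proof -
  have "((\<lambda>u. u powr (p - 1)) has_integral ((\<lambda>u. u powr p / p) b - (\<lambda>u. u powr p / p) a)) {a..b}"
  proof (rule fundamental_theorem_of_calculus_interior)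
    show "a \<le> b" by fact
    show "continuous_on {a..b} (\<lambda>u. u powr p / p)"
      using assms by (auto intro!: continuous_intros continuous_on_powr')
    show "((\<lambda>u. u powr p / p) has_vector_derivative x powr (p - 1)) (at x)" if "x \<in> {a<..<b}" for x
    proof -
      have "x > 0" using assms that by auto
      have "((\<lambda>u. u powr p / p) has_real_derivative (p * x powr (p - 1)) / p) (at x)"
        by (intro DERIV_cdivide has_real_derivative_powr \<open>x > 0\<close>)
      then show "((\<lambda>u. u powr p / p) has_vector_derivative x powr (p - 1)) (at x)"
        using assms by (simp add: has_real_derivative_iff_has_vector_derivative)
    qed
  qed
  then show ?thesis by simp
qed

lemma piece:
  fixes a b p :: real
  assumes "0 \<le> a" "a \<le> b" "p > 0"
  shows "exp (- b) * (b powr p / p - a powr p / p)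
      \<le> integral {a..b} (\<lambda>u. u powr (p - 1) / exp u)"
proof -
  have int: "(\<lambda>u. u powr (p - 1) / exp u) integrable_on {a..b}"
    using integrable_on_subinterval[OF has_integral_integrable[OF Gamma_integral_real[OF assms(3)]]]
      assms by auto
  have "((\<lambda>u. exp (- b) * u powr (p - 1)) has_integral exp (- b) * (b powr p / p - a powr p / p)) {a..b}"
    by (intro has_integral_mult_right ftc_powr assms)
  moreover have "exp (- b) * u powr (p - 1) \<le> u powr (p - 1) / exp u" if "u \<in> {a..b}" for u
  proof -
    have "exp (- b) \<le> 1 / exp u" using that by (simp add: exp_minus inverse_eq_divide frac_le)
    moreover have "u powr (p - 1) \<ge> 0" by simp
    ultimately have "exp (- b) * u powr (p - 1) \<le> (1 / exp u) * u powr (p - 1)"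
      by (rule mult_right_mono)
    then show ?thesis by simp
  qed
  ultimately show ?thesis
    using has_integral_le[OF _ integrable_integral[OF int]] by blast
qed

lemma term_bound:
  fixes \<alpha> :: real and n :: nat
  assumes "0 < \<alpha>" "\<alpha> < 1" "n > 0"
  shows "0 \<le> (1 - 1 / real n powr \<alpha>) ^ n \<and> (1 - 1 / real n powr \<alpha>) ^ n \<le> exp (- (real n powr (1 - \<alpha>)))"
proof -
  define y where "y = 1 / real n powr \<alpha>"
  have n1: "real n \<ge> 1" using assms by simp
  have "real n powr \<alpha> \<ge> 1" using n1 assms by (simp add: ge_one_powr_ge_zero)
  then have y01: "0 < y" "y \<le> 1" unfolding y_def using assms by auto
  have le: "1 - y \<le> exp (- y)" using exp_ge_add_one_self[of "- y"] by simp
  have "(1 - y) ^ n \<le> exp (- y) ^ n"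
    using y01 le by (intro power_mono) auto
  also have "\<dots> = exp (real n * (- y))" by (metis exp_of_nat_mult mult_minus_right)
  also have "real n * y = real n powr (1 - \<alpha>)"
    using n1 by (simp add: y_def powr_diff)
  then have "exp (real n * (- y)) = exp (- (real n powr (1 - \<alpha>)))" by simp
  finally show ?thesis using y01 unfolding y_def by simp
qed

theorem lemma7:
  fixes \<alpha> :: real
  assumes "0 < \<alpha>" and "\<alpha> < 1"
  shows "summable (\<lambda>t::nat. (1 - 1 / real (Suc t) powr \<alpha>) ^ Suc t)
    \<and> (\<Sum>t. (1 - 1 / real (Suc t) powr \<alpha>) ^ Suc t)
        \<le> 1 / (1 - \<alpha>) * Gamma (1 / (1 - \<alpha>))"
proof -
  define \<beta> where "\<beta> = 1 - \<alpha>"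
  define p where "p = 1 / \<beta>"
  define h where "h = (\<lambda>u::real. u powr (p - 1) / exp u)"
  have b0: "\<beta> > 0" "\<beta> < 1" using assms by (auto simp: \<beta>_def)
  have p0: "p > 0" using b0 by (simp add: p_def)
  have bp: "\<beta> * p = 1" using b0 by (simp add: p_def)
  have G: "(h has_integral Gamma p) {0..}" unfolding h_def by (rule Gamma_integral_real[OF p0])
  have hint: "h integrable_on {0..}" using G by (rule has_integral_integrable)
  have hsub: "h integrable_on {0..c}" for c
    by (rule integrable_on_subinterval[OF hint]) auto
  have hnn: "h u \<ge> 0" for u by (simp add: h_def)
  have pw: "(real m powr \<beta>) powr p = real m" for m
    using bp by (simp add: powr_powr)
  define a where "a = (\<lambda>t::nat. (1 - 1 / real (Suc t) powr \<alpha>) ^ Suc t)"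
  define e where "e = (\<lambda>t::nat. exp (- (real (Suc t) powr \<beta>)))"
  have ae: "0 \<le> a t \<and> a t \<le> e t" for t
    using term_bound[OF assms, of "Suc t"] unfolding a_def e_def \<beta>_def by simp
  have claim: "(\<Sum>t<N. e t) \<le> p * integral {0..real N powr \<beta>} h" for N
  proof (induction N)
    case 0
    then show ?case by simp
  next
    case (Suc N)
    define c where "c = real N powr \<beta>"
    define d where "d = real (Suc N) powr \<beta>"
    have c0: "0 \<le> c" by (simp add: c_def)
    have cd: "c \<le> d" unfolding c_def d_def using b0 by (intro powr_mono2) auto
    have comb: "integral {0..c} h + integral {c..d} h = integral {0..d} h"
      by (rule Henstock_Kurzweil_Integration.integral_combine[OF c0 cd hsub])
    have "exp (- d) * (d powr p / p - c powr p / p) \<le> integral {c..d} h"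
      unfolding h_def by (rule piece[OF c0 cd p0])
    moreover have "d powr p / p - c powr p / p = 1 / p"
      unfolding c_def d_def pw by (simp add: diff_divide_distrib[symmetric])
    ultimately have "exp (- d) / p \<le> integral {c..d} h" by simp
    then have "exp (- d) \<le> p * integral {c..d} h" using p0 by (simp add: field_simps)
    then have "(\<Sum>t<Suc N. e t) \<le> p * integral {0..c} h + p * integral {c..d} h"
      using Suc.IH by (simp add: e_def c_def d_def)
    also have "\<dots> = p * integral {0..d} h" using comb by (simp add: distrib_left[symmetric])
    finally show ?case by (simp add: d_def)
  qed
  have bnd: "(\<Sum>t<N. a t) \<le> p * Gamma p" for N
  proof -
    have "(\<Sum>t<N. a t) \<le> (\<Sum>t<N. e t)" using ae by (intro sum_mono) auto
    also have "\<dots> \<le> p * integral {0..real N powr \<beta>} h" by (rule claim)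
    also have "integral {0..real N powr \<beta>} h \<le> integral {0..} h"
      by (rule integral_subset_le) (auto simp: hsub hint hnn)
    then have "p * integral {0..real N powr \<beta>} h \<le> p * Gamma p"
      using p0 G by (simp add: integral_unique)
    finally show ?thesis .
  qed
  have sa: "summable a"
  proof (rule bounded_imp_summable)
    show "0 \<le> a n" for n using ae by blast
    show "(\<Sum>k\<le>n. a k) \<le> p * Gamma p" for n
      using bnd[of "Suc n"] by (simp add: lessThan_Suc_atMost)
  qed
  have "suminf a \<le> p * Gamma p" by (rule suminf_le_const[OF sa bnd])
  moreover have "p * Gamma p = 1 / (1 - \<alpha>) * Gamma (1 / (1 - \<alpha>))"
    by (simp add: p_def \<beta>_def)
  ultimately show ?thesis using sa unfolding a_def by simp
qed

end
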